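(* Let $a,b,c,d>0$ with $a+c\le b+d$, let $\mu\in(0,1]$ and $u>(c+d)/2$, and consider on $\mathcal{I}=[0,1]^2$ the controlled system $$\dot x=x(1-x)\big[xr(-c+d-a+b)+x(a-b)-r(d+b)+b+u\big]+\mu(1-2x),\qquad \dot r=r(1-r)(2x-1).$$ Let $(x_t^*,1)$ be the equilibrium on the side $\{r=1\}$ with $x_t^*\in(1/2,1)$. Then $(x_t^*,1)$ is almost globally stable.
   Context: For these parameters there is exactly one equilibrium $(x_t^*,1)$ on $\mathcal{B}_t=\{(x,1):x\in[0,1]\}$ with $x_t^*\in(1/2,1)$. An equilibrium is almost globally stable if it is asymptotically stable and every trajectory starting in $\mathcal{I}\setminus(\mathcal{B}_t\cup\mathcal{B}_b)$ converges to it, where $\mathcal{B}_b=\{(x,0):x\in[0,1]\}$. *)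

theory Defs
  imports "HOL-Analysis.Analysis"
begin

definition field :: "real \<Rightarrow> real \<Rightarrow> real \<Rightarrow> real \<Rightarrow> real \<Rightarrow> real \<Rightarrow> real \<times> real \<Rightarrow> real \<times> real" where
  "field a b c d \<mu> u p =
     (let x = fst p; r = snd p in
      (x * (1 - x) * (x * r * (- c + d - a + b) + x * (a - b) - r * (d + b) + b + u)
         + \<mu> * (1 - 2 * x),
       r * (1 - r) * (2 * x - 1)))"

definition Icube :: "(real \<times> real) set" where
  "Icube = {0..1} \<times> {0..1}"

definition Btop :: "(real \<times> real) set" where
  "Btop = {p. fst p \<in> {0..1} \<and> snd p = 1}"

definition Bbot :: "(real \<times> real) set" where
  "Bbot = {p. fst p \<in> {0..1} \<and> snd p = 0}"

definition trajectory :: "(real \<times> real \<Rightarrow> real \<times> real) \<Rightarrow> real \<times> real \<Rightarrow> (real \<Rightarrow> real \<times> real) \<Rightarrow> bool" where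
  "trajectory f p0 \<phi> \<longleftrightarrow> \<phi> 0 = p0 \<and>
     (\<forall>t\<ge>0. (\<phi> has_vector_derivative f (\<phi> t)) (at t within {0..}))"

definition lyap_stable :: "(real \<times> real \<Rightarrow> real \<times> real) \<Rightarrow> (real \<times> real) set \<Rightarrow> real \<times> real \<Rightarrow> bool" where
  "lyap_stable f S e \<longleftrightarrow>
     (\<forall>\<epsilon>>0. \<exists>\<delta>>0. \<forall>p0 \<phi>. p0 \<in> S \<and> dist p0 e < \<delta> \<and> trajectory f p0 \<phi> \<longrightarrow>
        (\<forall>t\<ge>0. dist (\<phi> t) e < \<epsilon>))"

definition asympt_stable :: "(real \<times> real \<Rightarrow> real \<times> real) \<Rightarrow> (real \<times> real) set \<Rightarrow> real \<times> real \<Rightarrow> bool" where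
  "asympt_stable f S e \<longleftrightarrow> f e = 0 \<and> lyap_stable f S e \<and>
     (\<exists>\<delta>>0. \<forall>p0 \<phi>. p0 \<in> S \<and> dist p0 e < \<delta> \<and> trajectory f p0 \<phi> \<longrightarrow>
        (\<phi> \<longlongrightarrow> e) at_top)"

definition almost_globally_stable :: "(real \<times> real \<Rightarrow> real \<times> real) \<Rightarrow> real \<times> real \<Rightarrow> bool" where
  "almost_globally_stable f e \<longleftrightarrow> asympt_stable f Icube e \<and>
     (\<forall>p0 \<phi>. p0 \<in> Icube - (Btop \<union> Bbot) \<and> trajectory f p0 \<phi> \<longrightarrow> (\<phi> \<longlongrightarrow> e) at_top)"

end

theory Submission
  imports Defs
begin


lemma deriv_mono_gen:
  fixes f f' :: "real \<Rightarrow> real"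
  assumes der: "\<And>t. t \<ge> 0 \<Longrightarrow> (f has_real_derivative f' t) (at t within {0..})"
    and ab: "0 \<le> a" "a \<le> b" and pos: "\<And>t. a \<le> t \<Longrightarrow> t \<le> b \<Longrightarrow> f' t \<ge> C"
  shows "f b \<ge> f a + C * (b - a)"
proof -
  let ?g = "\<lambda>t. f t - C * t"
  have "\<And>x. a \<le> x \<Longrightarrow> x \<le> b \<Longrightarrow> (?g has_derivative (\<lambda>h. (f' x - C) * h)) (at x within {a..b})"
  proof -
    fix x assume x: "a \<le> x" "x \<le> b"
    have "(f has_real_derivative f' x) (at x within {a..b})"
      using der[of x] x ab by (auto intro: has_field_derivative_subset)
    then have "(?g has_real_derivative f' x - C) (at x within {a..b})"
      by (auto intro!: derivative_eq_intros)
    then show "(?g has_derivative (\<lambda>h. (f' x - C) * h)) (at x within {a..b})"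
      by (simp only: has_field_derivative_def)
  qed
  from mvt_very_simple[OF ab(2) this] obtain x where x: "x \<in> {a..b}"
    and eq: "?g b - ?g a = (f' x - C) * (b - a)" by blast
  have "(f' x - C) * (b - a) \<ge> 0" using pos[of x] x ab by auto
  with eq show ?thesis by (simp add: algebra_simps)
qed

lemma cont_of_deriv:
  fixes f f' :: "real \<Rightarrow> real"
  assumes der: "\<And>t. t \<ge> 0 \<Longrightarrow> (f has_real_derivative f' t) (at t within {0..})"
  shows "continuous_on {0..} f"
proof -
  have "\<And>t. t \<in> {0..} \<Longrightarrow> continuous (at t within {0..}) f"
    using der by (auto intro: DERIV_continuous)
  then show ?thesis by (simp add: continuous_on_eq_continuous_within)
qed

lemma barrier:
  fixes f f' :: "real \<Rightarrow> real"
  assumes der: "\<And>t. t \<ge> 0 \<Longrightarrow> (f has_real_derivative f' t) (at t within {0..})"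
    and t0: "0 \<le> t0" "f t0 \<ge> c"
    and push: "\<And>s. s \<ge> t0 \<Longrightarrow> f s = c \<Longrightarrow> f' s > 0"
    and t: "t \<ge> t0"
  shows "f t \<ge> c"
proof (rule ccontr)
  assume "\<not> f t \<ge> c"
  then have ft: "f t < c" by simp
  have c0: "continuous_on {0..} f"
    by (rule cont_of_deriv, rule der)
  have cont: "continuous_on {t0..t} f"
    using c0 by (rule continuous_on_subset) (use t0 in auto)
  define S where "S = {t0..t} \<inter> f -` {c..}"
  have clS: "closed S" unfolding S_def
    by (rule continuous_closed_preimage[OF cont]) auto
  have t0S: "t0 \<in> S" using t0 t by (auto simp: S_def)
  have bdd: "bdd_above S" by (auto simp: S_def bdd_above_def)
  define s where "s = Sup S"
  have sS: "s \<in> S" unfolding s_def using closed_contains_Sup[OF _ bdd clS] t0S by auto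
  have sle: "\<And>\<tau>. \<tau> \<in> S \<Longrightarrow> \<tau> \<le> s" unfolding s_def using bdd by (auto intro: cSup_upper)
  have s1: "t0 \<le> s" "s \<le> t" "f s \<ge> c" using sS by (auto simp: S_def)
  have "s \<noteq> t" using s1 ft by auto
  with s1 have st: "s < t" by auto
  have cont2: "continuous_on {s..t} f" using cont by (rule continuous_on_subset) (use s1 in auto)
  from IVT2'[of f t c s, OF _ _ _ cont2] ft s1 st obtain z where z: "s \<le> z" "z \<le> t" "f z = c" by auto
  then have "z \<in> S" using s1 by (auto simp: S_def)
  then have "z = s" using sle[of z] z by auto
  with z have fs: "f s = c" by simp
  have "(f has_real_derivative f' s) (at s within {0..})" using der s1 t0 by auto
  from has_real_derivative_pos_inc_right[OF this push[OF s1(1) fs]]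
  obtain d where d: "d > 0" "\<And>h. h > 0 \<Longrightarrow> s + h \<in> {0..} \<Longrightarrow> h < d \<Longrightarrow> f s < f (s + h)" by blast
  define h where "h = min (d/2) (t - s)"
  have h: "h > 0" "h < d" "s + h \<le> t" using d st by (auto simp: h_def)
  have "f (s + h) > c" using d(2)[OF h(1) _ h(2)] fs s1 t0 h by auto
  then have "s + h \<in> S" using h s1 by (auto simp: S_def)
  then show False using sle h by fastforce
qed



lemma deriv_mono_ab:
  fixes f f' :: "real \<Rightarrow> real"
  assumes der: "\<And>t. a \<le> t \<Longrightarrow> t \<le> b \<Longrightarrow> (f has_real_derivative f' t) (at t within {a..b})"
    and ab: "a \<le> b" and pos: "\<And>t. a \<le> t \<Longrightarrow> t \<le> b \<Longrightarrow> f' t \<ge> C"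
  shows "f b \<ge> f a + C * (b - a)"
proof -
  let ?g = "\<lambda>t. f t - C * t"
  have "\<And>x. a \<le> x \<Longrightarrow> x \<le> b \<Longrightarrow> (?g has_derivative (\<lambda>h. (f' x - C) * h)) (at x within {a..b})"
  proof -
    fix x assume x: "a \<le> x" "x \<le> b"
    have "(f has_real_derivative f' x) (at x within {a..b})"
      using der[of x] x ab by auto
    then have "(?g has_real_derivative f' x - C) (at x within {a..b})"
      by (auto intro!: derivative_eq_intros)
    then show "(?g has_derivative (\<lambda>h. (f' x - C) * h)) (at x within {a..b})"
      by (simp only: has_field_derivative_def)
  qed
  from mvt_very_simple[OF ab this] obtain x where x: "x \<in> {a..b}"
    and eq: "?g b - ?g a = (f' x - C) * (b - a)" by blast
  have "(f' x - C) * (b - a) \<ge> 0" using pos[of x] x ab by auto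
  with eq show ?thesis by (simp add: algebra_simps)
qed

lemma barrier_strict:
  fixes f f' :: "real \<Rightarrow> real"
  assumes der: "\<And>t. t \<ge> 0 \<Longrightarrow> (f has_real_derivative f' t) (at t within {0..})"
    and t0: "0 \<le> t0" "f t0 > c"
    and push: "\<And>s. s \<ge> t0 \<Longrightarrow> f s = c \<Longrightarrow> f' s > 0"
    and t: "t \<ge> t0"
  shows "f t > c"
proof (rule ccontr)
  assume "\<not> f t > c"
  moreover have ge: "\<And>\<tau>. \<tau> \<ge> t0 \<Longrightarrow> f \<tau> \<ge> c"
    using barrier[where f=f and f'=f', OF der] t0 push by (metis less_imp_le)
  ultimately have ft: "f t = c" using t by force
  have tt: "t \<noteq> t0" using ft t0 by auto
  have "(f has_real_derivative f' t) (at t within {0..})" using der t t0 by auto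
  from has_real_derivative_pos_inc_left[OF this push[OF t ft]]
  obtain d where d: "d > 0" "\<And>h. h > 0 \<Longrightarrow> t - h \<in> {0..} \<Longrightarrow> h < d \<Longrightarrow> f (t - h) < f t" by blast
  define h where "h = min (d/2) (t - t0)"
  have h: "h > 0" "h < d" "t - h \<ge> t0" using d t tt by (auto simp: h_def)
  have "f (t - h) < c" using d(2)[OF h(1) _ h(2)] ft t0 h by auto
  with ge[OF h(3)] show False by simp
qed

lemma reach:
  fixes f f' :: "real \<Rightarrow> real"
  assumes der: "\<And>t. t \<ge> 0 \<Longrightarrow> (f has_real_derivative f' t) (at t within {0..})"
    and t0: "0 \<le> t0" and m: "m > 0"
    and bnd: "\<And>t. t \<ge> t0 \<Longrightarrow> lo \<le> f t \<and> f t \<le> hi"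
    and push: "\<And>t. t \<ge> t0 \<Longrightarrow> f t \<le> c \<Longrightarrow> f' t \<ge> m"
  shows "\<exists>t\<ge>t0. f t > c"
proof (rule ccontr)
  assume "\<not> (\<exists>t\<ge>t0. f t > c)"
  then have le: "\<And>t. t \<ge> t0 \<Longrightarrow> f t \<le> c" by force
  define T where "T = t0 + (hi - lo) / m + 1"
  have hl: "hi \<ge> lo" using bnd[of t0] by auto
  have "(hi - lo)/m \<ge> 0" using hl m by auto
  then have T: "t0 \<le> T" by (simp add: T_def)
  have "f T \<ge> f t0 + m * (T - t0)"
    by (rule deriv_mono_gen[where f'=f']) (use der t0 T push le in auto)
  moreover have "m * (T - t0) = hi - lo + m" using m by (simp add: T_def field_simps)
  ultimately have "f T \<ge> f t0 + hi - lo + m" by simp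
  then show False using bnd[of t0] bnd[OF T] m t0 by auto
qed

lemma exp_form:
  fixes f k :: "real \<Rightarrow> real"
  assumes der: "\<And>t. t \<ge> 0 \<Longrightarrow> (f has_real_derivative f t * k t) (at t within {0..})"
    and kc: "continuous_on {0..} k" and T: "T \<ge> 0"
  shows "\<exists>K. f T = f 0 * exp K"
proof -
  define G where "G = (\<lambda>\<tau>. integral {0..\<tau>} k)"
  have kc': "continuous_on {0..T} k" using kc by (rule continuous_on_subset) auto
  have dG: "\<And>t. 0 \<le> t \<Longrightarrow> t \<le> T \<Longrightarrow> (G has_real_derivative k t) (at t within {0..T})"
    unfolding G_def by (rule integral_has_real_derivative[OF kc']) auto
  let ?g = "\<lambda>t. f t * exp (- G t)"
  have dg: "\<And>t. 0 \<le> t \<Longrightarrow> t \<le> T \<Longrightarrow> (?g has_real_derivative 0) (at t within {0..T})"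
  proof -
    fix t assume t: "0 \<le> t" "t \<le> T"
    have df: "(f has_real_derivative f t * k t) (at t within {0..T})"
      using der[of t] t by (auto intro: has_field_derivative_subset)
    show "(?g has_real_derivative 0) (at t within {0..T})"
      using df dG[OF t] by (auto intro!: derivative_eq_intros simp: algebra_simps)
  qed
  have "?g T \<ge> ?g 0 + 0 * (T - 0)"
    by (rule deriv_mono_ab[where f'="\<lambda>_. 0"]) (use dg T in auto)
  moreover have "(\<lambda>t. - ?g t) T \<ge> (\<lambda>t. - ?g t) 0 + 0 * (T - 0)"
  proof (rule deriv_mono_ab[where f'="\<lambda>_. 0"])
    fix t assume "0 \<le> t" "t \<le> T"
    from DERIV_minus[OF dg[OF this]]
    show "((\<lambda>t. - ?g t) has_real_derivative 0) (at t within {0..T})" by simp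
  qed (use T in auto)
  ultimately have "?g T = ?g 0" by simp
  moreover have "G 0 = 0" by (simp add: G_def)
  ultimately have "f T * exp (- G T) = f 0" by simp
  then have "f T = f 0 * exp (G T)" by (simp add: exp_minus field_simps)
  then show ?thesis by blast
qed

lemma traj_fst:
  assumes "trajectory f p0 \<phi>" "t \<ge> 0"
  shows "((\<lambda>t. fst (\<phi> t)) has_real_derivative fst (f (\<phi> t))) (at t within {0..})"
proof -
  have "(\<phi> has_vector_derivative f (\<phi> t)) (at t within {0..})" using assms by (auto simp: trajectory_def)
  then have "((\<lambda>t. fst (\<phi> t)) has_derivative (\<lambda>h. fst (h *\<^sub>R f (\<phi> t)))) (at t within {0..})"
    unfolding has_vector_derivative_def by (rule has_derivative_fst)
  moreover have e: "(\<lambda>h. fst (h *\<^sub>R f (\<phi> t))) = (*) (fst (f (\<phi> t)))" by (rule ext) simp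
  ultimately show ?thesis unfolding has_field_derivative_def by simp
qed

lemma traj_snd:
  assumes "trajectory f p0 \<phi>" "t \<ge> 0"
  shows "((\<lambda>t. snd (\<phi> t)) has_real_derivative snd (f (\<phi> t))) (at t within {0..})"
proof -
  have "(\<phi> has_vector_derivative f (\<phi> t)) (at t within {0..})" using assms by (auto simp: trajectory_def)
  then have "((\<lambda>t. snd (\<phi> t)) has_derivative (\<lambda>h. snd (h *\<^sub>R f (\<phi> t)))) (at t within {0..})"
    unfolding has_vector_derivative_def by (rule has_derivative_snd)
  moreover have e: "(\<lambda>h. snd (h *\<^sub>R f (\<phi> t))) = (*) (snd (f (\<phi> t)))" by (rule ext) simp
  ultimately show ?thesis unfolding has_field_derivative_def by simp
qed



definition Fx :: "real \<Rightarrow> real \<Rightarrow> real \<Rightarrow> real \<Rightarrow> real \<Rightarrow> real \<Rightarrow> real \<Rightarrow> real \<Rightarrow> real" where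
  "Fx a b c d \<mu> u x r = x * (1 - x) * (x * r * (- c + d - a + b) + x * (a - b) - r * (d + b) + b + u)
         + \<mu> * (1 - 2 * x)"

lemma field_eq: "field a b c d \<mu> u p = (Fx a b c d \<mu> u (fst p) (snd p), snd p * (1 - snd p) * (2 * fst p - 1))"
  by (simp add: field_def Fx_def Let_def)

context
  fixes a b c d \<mu> u :: real
  assumes pos: "a > 0" "b > 0" "c > 0" "d > 0" "0 < \<mu>" "\<mu> \<le> 1" "u > (c + d) / 2"
begin

abbreviation "F \<equiv> Fx a b c d \<mu> u"
abbreviation "g1 x \<equiv> F x 1"
definition "k0 = u - (c + d) / 2"

lemma k0_eq: "k0 = u - (c + d) / 2" by (simp add: k0_def)
lemma k0_pos: "k0 > 0" using pos by (simp add: k0_def)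

lemma F_decomp: "F x r = g1 x + (1 - r) * (x * (1 - x) * (x * (a + c) + (1 - x) * (b + d)))"
  by (simp add: Fx_def algebra_simps)

lemma F_ge_g1: "0 \<le> x \<Longrightarrow> x \<le> 1 \<Longrightarrow> r \<le> 1 \<Longrightarrow> F x r \<ge> g1 x"
  using pos by (subst F_decomp) (auto intro!: mult_nonneg_nonneg add_nonneg_nonneg)

lemma F_le: "0 \<le> x \<Longrightarrow> x \<le> 1 \<Longrightarrow> 0 \<le> r \<Longrightarrow> r \<le> 1 \<Longrightarrow> F x r \<le> g1 x + (1 - r) * (a + b + c + d)"
proof -
  assume x: "0 \<le> x" "x \<le> 1" and r: "0 \<le> r" "r \<le> 1"
  have s: "x * (a + c) + (1 - x) * (b + d) \<le> a + b + c + d"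
    using x pos by (smt (verit) mult_left_le_one_le mult_nonneg_nonneg)
  have s0: "x * (a + c) + (1 - x) * (b + d) \<ge> 0" using x pos by auto
  have xx: "x * (1 - x) \<le> 1" "x * (1 - x) \<ge> 0" using x by (auto simp: mult_le_one)
  have "x * (1 - x) * (x * (a + c) + (1 - x) * (b + d)) \<le> 1 * (a + b + c + d)"
    by (rule mult_mono) (use xx s s0 in auto)
  then have "(1 - r) * (x * (1 - x) * (x * (a + c) + (1 - x) * (b + d))) \<le> (1 - r) * (a + b + c + d)"
    using r by (intro mult_left_mono) auto
  then show ?thesis by (subst F_decomp) simp
qed

lemma F_0: "F 0 r = \<mu>" and F_1: "F 1 r = - \<mu>"
  by (simp_all add: Fx_def)

lemma g1_y: "g1 (1/2 + y) = (1/4 - y^2) * (k0 + (d - c) * y) - 2 * \<mu> * y"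
  by (simp add: Fx_def k0_def power2_eq_square) algebra

lemma g1_sign_aux:
  assumes y: "0 \<le> y1" "y1 < y2" "y2 \<le> 1/2" and h1: "g1 (1/2 + y1) \<le> 0"
  shows "g1 (1/2 + y2) < 0"
proof -
  define e where "e = d - c"
  have k0: "k0 > 0" by (rule k0_pos)
  have h1': "(1/4 - y1^2) * (k0 + e * y1) - 2 * \<mu> * y1 \<le> 0" using h1 g1_y[of y1] by (simp add: e_def)
  have y2p: "y2 > 0" using y by simp
  have "(1/4 - y2^2) * (k0 + e * y2) - 2 * \<mu> * y2 < 0"
  proof (cases "e \<ge> 0")
    case True
    have y1p: "y1 > 0"
    proof (rule ccontr)
      assume "\<not> y1 > 0" then have "y1 = 0" using y by simp
      then show False using h1' k0 by simp
    qed
    have id: "y1 * ((1/4 - y2^2) * (k0 + e * y2) - 2 * \<mu> * y2) - y2 * ((1/4 - y1^2) * (k0 + e * y1) - 2 * \<mu> * y1)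
        = - (y2 - y1) * (k0/4 + k0 * y1 * y2 + e * y1 * y2 * (y1 + y2))"
      by (simp add: power2_eq_square field_simps)
    have "k0/4 + k0 * y1 * y2 + e * y1 * y2 * (y1 + y2) > 0"
      using k0 True y1p y2p by (intro add_pos_nonneg) (auto intro!: mult_nonneg_nonneg)
    then have "- (y2 - y1) * (k0/4 + k0 * y1 * y2 + e * y1 * y2 * (y1 + y2)) < 0"
      using y by (simp add: mult_neg_pos)
    moreover have "y2 * ((1/4 - y1^2) * (k0 + e * y1) - 2 * \<mu> * y1) \<le> 0"
      using h1' y2p by (simp add: mult_nonneg_nonpos)
    ultimately have "y1 * ((1/4 - y2^2) * (k0 + e * y2) - 2 * \<mu> * y2) < 0" using id by (smt (verit))
    then show ?thesis using y1p by (simp add: mult_less_0_iff)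
  next
    case False
    have q2: "1/4 - y2^2 \<ge> 0"
    proof -
      have "y2^2 \<le> (1/2)^2" using y by (intro power_mono) auto
      then show ?thesis by (simp add: power2_eq_square)
    qed
    show ?thesis
    proof (cases "k0 + e * y2 \<le> 0")
      case True
      have "(1/4 - y2^2) * (k0 + e * y2) \<le> 0" using q2 True by (simp add: mult_nonneg_nonpos)
      then show ?thesis using pos y2p by (smt (verit) mult_pos_pos)
    next
      case c2: False
      have A: "k0 + e * y1 > k0 + e * y2" using False y by (simp add: mult_strict_left_mono_neg)
      have q1: "1/4 - y1^2 > 1/4 - y2^2"
      proof -
        have "y1^2 < y2^2" using y by (intro power_strict_mono) auto
        then show ?thesis by simp
      qed
      have "(1/4 - y2^2) * (k0 + e * y2) \<le> (1/4 - y2^2) * (k0 + e * y1)"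
        using q2 A by (intro mult_left_mono) auto
      also have "\<dots> < (1/4 - y1^2) * (k0 + e * y1)"
        using q1 A c2 by (intro mult_strict_right_mono) auto
      finally have "(1/4 - y2^2) * (k0 + e * y2) < (1/4 - y1^2) * (k0 + e * y1)" .
      moreover have "2 * \<mu> * y1 \<le> 2 * \<mu> * y2" using pos y by simp
      ultimately show ?thesis using h1' by linarith
    qed
  qed
  then show ?thesis using g1_y[of y2] by (simp add: e_def)
qed

lemma g1_sign:
  assumes "1/2 \<le> x1" "x1 < x2" "x2 \<le> 1" "g1 x1 \<le> 0"
  shows "g1 x2 < 0"
  using g1_sign_aux[of "x1 - 1/2" "x2 - 1/2"] assms by simp

lemma g1_half: "g1 (1/2) = k0 / 4"
  using g1_y[of 0] by simp

lemma F_lin: "F x r = (1 - r) * F x 0 + r * g1 x"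
  by (simp add: Fx_def algebra_simps)

lemma g0_low: assumes "0 \<le> x" "x \<le> 1/2" shows "F x 0 \<ge> min \<mu> (u/4)"
proof -
  have "F x 0 = x * (1 - x) * (x * a + (1 - x) * b + u) + \<mu> * (1 - 2 * x)"
    by (simp add: Fx_def algebra_simps)
  moreover have "x * (1 - x) * (x * a + (1 - x) * b + u) \<ge> x * (1 - x) * u"
    using assms pos by (intro mult_left_mono) auto
  moreover have "x * (1 - x) * u \<ge> (x / 2) * u"
  proof -
    have "x * (1 - x) - x / 2 = x * (1/2 - x)" by (simp add: algebra_simps)
    moreover have "x * (1/2 - x) \<ge> 0" using assms by simp
    ultimately have "x * (1 - x) \<ge> x / 2" by simp
    then show ?thesis using pos by (intro mult_right_mono) auto
  qed
  moreover have "(x / 2) * u + \<mu> * (1 - 2 * x) = (2 * x) * (u / 4) + (1 - 2 * x) * \<mu>" by (simp add: algebra_simps)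
  moreover have "(2 * x) * (u / 4) + (1 - 2 * x) * \<mu> \<ge> (2 * x) * min \<mu> (u/4) + (1 - 2 * x) * min \<mu> (u/4)"
    using assms by (intro add_mono mult_left_mono) auto
  ultimately show ?thesis by (simp add: algebra_simps)
qed

definition "beta = d / 8 + k0 / 2"
definition "m1 = min (min \<mu> (u/4)) (k0/4)"

lemma m1_pos: "m1 > 0" using pos k0_pos by (simp add: m1_def)

lemma g1_low: assumes "0 \<le> x" "x \<le> 1/2" shows "g1 x + beta * (1 - 2 * x) \<ge> k0 / 4"
proof -
  define y where "y = 1/2 - x"
  have y: "0 \<le> y" "y \<le> 1/2" using assms by (auto simp: y_def)
  have q: "1/4 - y^2 \<ge> 0"
  proof -
    have "y^2 \<le> (1/2)^2" using y by (intro power_mono) auto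
    then show ?thesis by (simp add: power2_eq_square)
  qed
  have xe: "x = 1/2 + (- y)" by (simp add: y_def)
  have "g1 x = (1/4 - (-y)^2) * (k0 + (d - c) * (- y)) - 2 * \<mu> * (- y)"
    by (subst xe) (rule g1_y)
  then have e1: "g1 x = (1/4 - y^2) * (k0 + (d - c) * (- y)) + 2 * (\<mu> * y)" by simp
  have e2: "(1/4 - y^2) * (k0 + (d - c) * (- y)) \<ge> (1/4 - y^2) * (k0 - d * y)"
    using q y pos by (intro mult_left_mono) (auto simp: algebra_simps)
  have e3: "(1/4 - y^2) * (d * y) \<le> (1/4) * (d * y)"
    using y pos by (intro mult_right_mono) auto
  have yy: "y^2 \<le> y" using y by (simp add: power2_eq_square mult_left_le_one_le)
  have k0: "k0 > 0" by (rule k0_pos)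
  have e4: "(1/4 - y^2) * (k0 - d * y) = (1/4 - y^2) * k0 - (1/4 - y^2) * (d * y)" by (simp add: algebra_simps)
  have e5: "beta * (1 - 2 * x) = d * y / 4 + k0 * y" unfolding beta_def y_def by (simp add: field_simps)
  have e6: "(1/4 - y^2) * k0 + k0 * y \<ge> k0 / 4"
  proof -
    have gen: "\<And>k::real. (1/4 - y^2) * k + k * y = k/4 + (y - y^2) * k" by (simp add: algebra_simps)
    have "(1/4 - y^2) * k0 + k0 * y = k0/4 + (y - y^2) * k0" by (rule gen)
    moreover have "(y - y^2) * k0 \<ge> 0" using yy k0 by simp
    ultimately show ?thesis by simp
  qed
  have e7: "\<mu> * y \<ge> 0" using pos y by simp
  from e1 e2 e3 e4 e5 e6 e7 show ?thesis by linarith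
qed

lemma step1_bound: assumes "0 \<le> x" "x \<le> 1/2" "0 \<le> r" "r \<le> 1"
  shows "F x r + beta * r * (1 - 2 * x) \<ge> m1"
proof -
  have "F x r + beta * r * (1 - 2 * x) = (1 - r) * F x 0 + r * (g1 x + beta * (1 - 2 * x))"
    by (subst F_lin) (simp add: algebra_simps)
  moreover have "(1 - r) * F x 0 \<ge> (1 - r) * m1"
    using g0_low[OF assms(1,2)] assms by (intro mult_left_mono) (auto simp: m1_def)
  moreover have "r * (g1 x + beta * (1 - 2 * x)) \<ge> r * m1"
  proof -
    have "m1 \<le> k0/4" unfolding m1_def by (rule min.cobounded2)
    then show ?thesis using g1_low[OF assms(1,2)] assms by (intro mult_left_mono) auto
  qed
  ultimately show ?thesis by (simp add: algebra_simps)
qed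

definition "delta = min (1/4) (min (k0 / (2 * c)) (k0 / 64))"

lemma delta_pos: "delta > 0" "delta \<le> 1/4" "delta \<le> k0 / (2 * c)" "delta \<le> k0 / 64"
proof -
  show "delta > 0" using pos k0_pos unfolding delta_def by auto
  show "delta \<le> 1/4" unfolding delta_def by (rule min.cobounded1)
  show "delta \<le> k0 / (2 * c)" unfolding delta_def by (rule min.coboundedI2[OF min.cobounded1])
  show "delta \<le> k0 / 64" unfolding delta_def by (rule min.coboundedI2[OF min.cobounded2])
qed

lemma strip_bound: assumes "1/2 \<le> x" "x \<le> 1/2 + delta" "r \<le> 1"
  shows "F x r \<ge> k0 / 16"
proof -
  define y where "y = x - 1/2"
  have y: "0 \<le> y" "y \<le> 1/4" "y \<le> k0 / (2 * c)" "y \<le> k0 / 64"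
    using assms delta_pos by (auto simp: y_def)
  have k0: "k0 > 0" by (rule k0_pos)
  have cy: "c * y \<le> k0 / 2" using y(3) pos by (simp add: field_simps)
  have q: "1/4 - y^2 \<ge> 3/16"
  proof -
    have "y^2 \<le> (1/4)^2" using y by (intro power_mono) auto
    then show ?thesis by (simp add: power2_eq_square)
  qed
  have xe: "x = 1/2 + y" by (simp add: y_def)
  have "g1 x = (1/4 - y^2) * (k0 + (d - c) * y) - 2 * \<mu> * y"
    by (subst xe) (rule g1_y)
  moreover have "(1/4 - y^2) * (k0 + (d - c) * y) \<ge> (3/16) * (k0 / 2)"
  proof -
    have "d * y \<ge> 0" using pos y by simp
    moreover have "(d - c) * y = d * y - c * y" by (simp add: algebra_simps)
    ultimately have "k0 + (d - c) * y \<ge> k0 / 2" using cy by linarith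
    then show ?thesis using q k0 by (intro mult_mono) auto
  qed
  moreover have "2 * \<mu> * y \<le> 2 * y" using pos y by (simp add: mult_left_le_one_le)
  ultimately have "g1 x \<ge> k0 / 16" using y k0 by simp
  with F_ge_g1[of x r] assms delta_pos show ?thesis by simp
qed

end


context
  fixes a b c d \<mu> u xt :: real
  assumes pos: "a > 0" "b > 0" "c > 0" "d > 0" "0 < \<mu>" "\<mu> \<le> 1" "u > (c + d) / 2"
    and xt: "1/2 < xt" "xt < 1" "Fx a b c d \<mu> u xt 1 = 0"
begin

lemma g1_before: "1/2 \<le> x \<Longrightarrow> x < xt \<Longrightarrow> Fx a b c d \<mu> u x 1 > 0"
  using g1_sign[OF pos, of x xt] xt by force

lemma g1_after: "xt < x \<Longrightarrow> x \<le> 1 \<Longrightarrow> Fx a b c d \<mu> u x 1 < 0"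
  using g1_sign[OF pos, of xt x] xt by force

context
  fixes \<phi> :: "real \<Rightarrow> real \<times> real" and p0
  assumes traj: "trajectory (field a b c d \<mu> u) p0 \<phi>" and p0: "p0 \<in> Icube"
begin

definition "X t = fst (\<phi> t)"
definition "R t = snd (\<phi> t)"

lemma dX: "t \<ge> 0 \<Longrightarrow> (X has_real_derivative Fx a b c d \<mu> u (X t) (R t)) (at t within {0..})"
  using traj_fst[OF traj, of t] unfolding X_def[abs_def] R_def by (simp add: field_eq)

lemma dR: "t \<ge> 0 \<Longrightarrow> (R has_real_derivative R t * ((1 - R t) * (2 * X t - 1))) (at t within {0..})"
  using traj_snd[OF traj, of t] unfolding X_def R_def[abs_def] by (simp add: field_eq mult.assoc)

lemma contX: "continuous_on {0..} X" by (rule cont_of_deriv, rule dX)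
lemma contR: "continuous_on {0..} R" by (rule cont_of_deriv, rule dR)

lemma X0: "X 0 \<in> {0..1}" "R 0 \<in> {0..1}"
  using p0 traj unfolding X_def R_def Icube_def trajectory_def by auto

lemma X_ge0: "t \<ge> 0 \<Longrightarrow> X t \<ge> 0"
  by (rule barrier[where f'="\<lambda>t. Fx a b c d \<mu> u (X t) (R t)", OF dX, of 0])
     (use X0 pos in \<open>auto simp: F_0[OF pos]\<close>)

lemma X_le1: "t \<ge> 0 \<Longrightarrow> X t \<le> 1"
proof -
  assume t: "t \<ge> 0"
  have "- X t \<ge> -1"
  proof (rule barrier[where f="\<lambda>t. - X t" and f'="\<lambda>t. - Fx a b c d \<mu> u (X t) (R t)", of 0])
    show "((\<lambda>t. - X t) has_real_derivative - Fx a b c d \<mu> u (X t) (R t)) (at t within {0..})" if "t \<ge> 0" for t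
      using DERIV_minus[OF dX[OF that]] .
  qed (use X0 pos t in \<open>auto simp: F_1[OF pos]\<close>)
  then show ?thesis by simp
qed

lemma R_exp: "t \<ge> 0 \<Longrightarrow> \<exists>K. R t = R 0 * exp K"
proof -
  assume t: "t \<ge> 0"
  have kc: "continuous_on {0..} (\<lambda>t. (1 - R t) * (2 * X t - 1))"
    using contX contR by (intro continuous_intros)
  show ?thesis by (rule exp_form[OF dR kc t])
qed

lemma R1_exp: "t \<ge> 0 \<Longrightarrow> \<exists>K. 1 - R t = (1 - R 0) * exp K"
proof -
  assume t: "t \<ge> 0"
  have kc: "continuous_on {0..} (\<lambda>t. - R t * (2 * X t - 1))"
    using contX contR by (intro continuous_intros)
  have d: "((\<lambda>t. 1 - R t) has_real_derivative (1 - R t) * (- R t * (2 * X t - 1))) (at t within {0..})"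
    if "t \<ge> 0" for t
    using dR[OF that] by (auto intro!: derivative_eq_intros simp: algebra_simps)
  from exp_form[OF d kc t] show ?thesis by simp
qed

lemma R_bounds: "t \<ge> 0 \<Longrightarrow> 0 \<le> R t \<and> R t \<le> 1"
proof -
  assume t: "t \<ge> 0"
  obtain K where K: "R t = R 0 * exp K" using R_exp[OF t] by blast
  obtain K' where K': "1 - R t = (1 - R 0) * exp K'" using R1_exp[OF t] by blast
  have "0 \<le> R 0 * exp K" using X0 by simp
  moreover have "0 \<le> (1 - R 0) * exp K'" using X0 by simp
  ultimately show ?thesis using K K' by linarith
qed

lemma R_pos: "t \<ge> 0 \<Longrightarrow> R 0 > 0 \<Longrightarrow> R t > 0"
  using R_exp[of t] by auto

lemma R_lt1: "t \<ge> 0 \<Longrightarrow> R 0 < 1 \<Longrightarrow> R t < 1"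
proof -
  assume t: "t \<ge> 0" and r: "R 0 < 1"
  obtain K' where K': "1 - R t = (1 - R 0) * exp K'" using R1_exp[OF t] by blast
  have "(1 - R 0) * exp K' > 0" using r by simp
  with K' show ?thesis by simp
qed

lemma Xhalf: "T0 \<ge> 0 \<Longrightarrow> X T0 > 1/2 \<Longrightarrow> t \<ge> T0 \<Longrightarrow> X t > 1/2"
proof (rule barrier_strict[where f'="\<lambda>t. Fx a b c d \<mu> u (X t) (R t)", OF dX])
  fix s assume "T0 \<ge> 0" "s \<ge> T0" "X s = 1/2"
  then have "Fx a b c d \<mu> u (X s) (R s) \<ge> k0 c d u / 16"
    using strip_bound[OF pos, of "X s" "R s"] delta_pos[OF pos] R_bounds[of s] by auto
  then show "Fx a b c d \<mu> u (X s) (R s) > 0" using k0_pos[OF pos] by linarith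
qed auto

lemma R_mono: assumes "T0 \<ge> 0" "X T0 > 1/2" "T0 \<le> s" "s \<le> t" shows "R s \<le> R t"
proof -
  have "R t \<ge> R s + 0 * (t - s)"
  proof (rule deriv_mono_gen[where f'="\<lambda>t. R t * ((1 - R t) * (2 * X t - 1))", OF dR])
    fix \<tau> assume "s \<le> \<tau>" "\<tau> \<le> t"
    then have "\<tau> \<ge> T0" "\<tau> \<ge> 0" using assms by auto
    then have "X \<tau> > 1/2" "0 \<le> R \<tau>" "R \<tau> \<le> 1" using Xhalf[OF assms(1,2)] R_bounds by auto
    then show "R \<tau> * ((1 - R \<tau>) * (2 * X \<tau> - 1)) \<ge> 0" by simp
  qed (use assms in auto)
  then show ?thesis by simp
qed

lemma reach_delta: assumes "T0 \<ge> 0" "X T0 > 1/2"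
  shows "\<exists>T1\<ge>T0. \<forall>t\<ge>T1. X t > 1/2 + delta c d u"
proof -
  have "\<exists>t\<ge>T0. X t > 1/2 + delta c d u"
  proof (rule reach[where f'="\<lambda>t. Fx a b c d \<mu> u (X t) (R t)", OF dX assms(1), of "k0 c d u / 16" 0 1])
    show "k0 c d u / 16 > 0" using k0_pos[OF pos] by simp
    show "0 \<le> X t \<and> X t \<le> 1" if "t \<ge> T0" for t using X_ge0 X_le1 that assms by auto
    show "Fx a b c d \<mu> u (X t) (R t) \<ge> k0 c d u / 16" if "t \<ge> T0" "X t \<le> 1/2 + delta c d u" for t
      using strip_bound[OF pos, of "X t" "R t"] Xhalf[OF assms that(1)] R_bounds[of t] that assms by auto
  qed
  then obtain T1 where T1: "T1 \<ge> T0" "X T1 > 1/2 + delta c d u" by blast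
  have "X t > 1/2 + delta c d u" if "t \<ge> T1" for t
  proof (rule barrier_strict[where f'="\<lambda>t. Fx a b c d \<mu> u (X t) (R t)", OF dX _ T1(2) _ that])
    show "0 \<le> T1" using T1 assms by simp
    fix s assume "s \<ge> T1" "X s = 1/2 + delta c d u"
    then have "Fx a b c d \<mu> u (X s) (R s) \<ge> k0 c d u / 16"
      using strip_bound[OF pos, of "X s" "R s"] delta_pos[OF pos] R_bounds[of s] T1 assms by auto
    then show "Fx a b c d \<mu> u (X s) (R s) > 0" using k0_pos[OF pos] by linarith
  qed
  with T1 show ?thesis by blast
qed

lemma R_conv: assumes "T0 \<ge> 0" "X T0 > 1/2" "R T0 > 0" and "e > 0"
  shows "\<exists>T. \<forall>t\<ge>T. 1 - R t < e"
proof -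
  obtain T1 where T1: "T1 \<ge> T0" "\<And>t. t \<ge> T1 \<Longrightarrow> X t > 1/2 + delta c d u"
    using reach_delta[OF assms(1,2)] by blast
  define \<rho> where "\<rho> = R T0"
  define kk where "kk = 2 * delta c d u * \<rho>"
  have kk: "kk > 0" using delta_pos[OF pos] assms by (simp add: kk_def \<rho>_def)
  have Rge: "R t \<ge> \<rho>" if "t \<ge> T0" for t using R_mono[OF assms(1,2) _ that] by (simp add: \<rho>_def)
  let ?g = "\<lambda>t. - ((1 - R t) * exp (kk * (t - T1)))"
  have gmono: "?g t \<ge> ?g T1 + 0 * (t - T1)" if t: "t \<ge> T1" for t
  proof (rule deriv_mono_gen[where f'="\<lambda>t. exp (kk * (t - T1)) * (1 - R t) * (R t * (2 * X t - 1) - kk)"])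
    fix \<tau> :: real assume "\<tau> \<ge> 0"
    show "(?g has_real_derivative exp (kk * (\<tau> - T1)) * (1 - R \<tau>) * (R \<tau> * (2 * X \<tau> - 1) - kk)) (at \<tau> within {0..})"
      using dR[OF \<open>\<tau> \<ge> 0\<close>] by (auto intro!: derivative_eq_intros simp: algebra_simps)
  next
    fix \<tau> assume \<tau>: "T1 \<le> \<tau>" "\<tau> \<le> t"
    then have "\<tau> \<ge> T0" "\<tau> \<ge> 0" using T1 assms by auto
    have x: "2 * X \<tau> - 1 \<ge> 2 * delta c d u" using T1(2)[of \<tau>] \<tau> by simp
    have r: "R \<tau> \<ge> \<rho>" "R \<tau> \<le> 1" using Rge[OF \<open>\<tau> \<ge> T0\<close>] R_bounds[OF \<open>\<tau> \<ge> 0\<close>] by auto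
    have "R \<tau> * (2 * X \<tau> - 1) \<ge> \<rho> * (2 * delta c d u)"
      using x r delta_pos[OF pos] assms by (intro mult_mono) (auto simp: \<rho>_def)
    then have "R \<tau> * (2 * X \<tau> - 1) - kk \<ge> 0" by (simp add: kk_def algebra_simps)
    then show "exp (kk * (\<tau> - T1)) * (1 - R \<tau>) * (R \<tau> * (2 * X \<tau> - 1) - kk) \<ge> 0"
      using r by simp
  qed (use T1 assms t in auto)
  have main: "(1 - R t) * exp (kk * (t - T1)) \<le> 1" if "t \<ge> T1" for t
  proof -
    have "(1 - R t) * exp (kk * (t - T1)) \<le> (1 - R T1) * exp (kk * (T1 - T1))"
      using gmono[OF that] by simp
    moreover have "R T1 \<ge> 0" using R_bounds[of T1] T1 assms by simp
    ultimately show ?thesis by simp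
  qed
  define T where "T = T1 + 1 / (kk * e)"
  have "1 - R t < e" if t: "t \<ge> T" for t
  proof -
    have "1 / (kk * e) > 0" using kk \<open>e > 0\<close> by simp
    then have tT1: "t \<ge> T1" using t unfolding T_def by linarith
    have B: "1 + kk * (t - T1) \<le> exp (kk * (t - T1))" by (rule exp_ge_add_one_self)
    have nn: "1 - R t \<ge> 0" using R_bounds[of t] tT1 T1 assms by auto
    have "(1 - R t) * (1 + kk * (t - T1)) \<le> (1 - R t) * exp (kk * (t - T1))"
      using nn B by (intro mult_left_mono) auto
    then have A: "(1 - R t) * (1 + kk * (t - T1)) \<le> 1"
      using main[OF tT1] by linarith
    have C: "kk * (t - T1) \<ge> 1 / e"
    proof -
      have "t - T1 \<ge> 1 / (kk * e)" using t by (simp add: T_def)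
      then have "kk * (t - T1) \<ge> kk * (1 / (kk * e))" using kk by (intro mult_left_mono) auto
      then show ?thesis using kk by simp
    qed
    have "(1 - R t) * (1 + 1 / e) \<le> (1 - R t) * (1 + kk * (t - T1))"
      using nn C by (intro mult_left_mono) auto
    then have "(1 - R t) * (1 + 1 / e) \<le> 1" using A by linarith
    then have "(1 - R t) * ((e + 1) / e) \<le> 1" using \<open>e > 0\<close> by (simp add: field_simps)
    then have "(1 - R t) * (e + 1) \<le> e" using \<open>e > 0\<close> by (simp add: field_simps)
    then have "1 - R t \<le> e / (e + 1)" using \<open>e > 0\<close> by (simp add: field_simps)
    moreover have "e / (e + 1) < e" using \<open>e > 0\<close> by (simp add: field_simps)
    ultimately show ?thesis by linarith
  qed
  then show ?thesis by blast
qed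

lemma dnX: "t \<ge> 0 \<Longrightarrow> ((\<lambda>t. - X t) has_real_derivative - Fx a b c d \<mu> u (X t) (R t)) (at t within {0..})"
  using DERIV_minus[OF dX] .

lemma g1_cont: "continuous_on S (\<lambda>x. Fx a b c d \<mu> u x 1)"
  unfolding Fx_def by (intro continuous_intros)

lemma X_conv: assumes T0: "T0 \<ge> 0" "X T0 > 1/2" "R T0 > 0" and e: "e > 0"
  shows "\<exists>T. \<forall>t\<ge>T. \<bar>X t - xt\<bar> < e"
proof -
  define e1 where "e1 = min e (min ((xt - 1/2)/2) ((1 - xt)/2))"
  have e1a: "e1 \<le> e" "e1 \<le> (xt - 1/2)/2" "e1 \<le> (1 - xt)/2" unfolding e1_def
    by (rule min.cobounded1, rule min.coboundedI2[OF min.cobounded1], rule min.coboundedI2[OF min.cobounded2])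
  have e1: "e1 > 0" "e1 \<le> e" "xt - e1 > 1/2" "xt + e1 < 1"
    using e xt e1a by (auto simp: e1_def)
  obtain z2 where z2: "z2 \<in> {xt+e1..1}" "\<And>y. y \<in> {xt+e1..1} \<Longrightarrow> Fx a b c d \<mu> u y 1 \<le> Fx a b c d \<mu> u z2 1"
    using continuous_attains_sup[of "{xt+e1..1}" "\<lambda>x. Fx a b c d \<mu> u x 1"] g1_cont e1 by auto
  define M2 where "M2 = - Fx a b c d \<mu> u z2 1"
  have M2: "M2 > 0" using g1_after[of z2] z2(1) e1 by (auto simp: M2_def)
  obtain z1 where z1: "z1 \<in> {1/2..xt-e1}" "\<And>y. y \<in> {1/2..xt-e1} \<Longrightarrow> Fx a b c d \<mu> u z1 1 \<le> Fx a b c d \<mu> u y 1"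
    using continuous_attains_inf[of "{1/2..xt-e1}" "\<lambda>x. Fx a b c d \<mu> u x 1"] g1_cont e1 by auto
  define M1 where "M1 = Fx a b c d \<mu> u z1 1"
  have M1: "M1 > 0" using g1_before[of z1] z1(1) e1 by (auto simp: M1_def)
  define Kc where "Kc = a + b + c + d"
  have Kc: "Kc > 0" using pos by (simp add: Kc_def)
  obtain T2' where T2': "\<And>t. t \<ge> T2' \<Longrightarrow> 1 - R t < M2 / (2 * Kc)"
    using R_conv[OF T0, of "M2 / (2 * Kc)"] M2 Kc by auto
  define T2 where "T2 = max T2' T0"
  have T2: "T2 \<ge> T0" "T2 \<ge> 0" using T0 by (auto simp: T2_def)
  have upper: "Fx a b c d \<mu> u (X t) (R t) \<le> - M2 / 2" if t: "t \<ge> T2" "X t \<ge> xt + e1" for t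
  proof -
    have t0: "t \<ge> 0" "t \<ge> T2'" using t T2 by (auto simp: T2_def)
    have xb: "0 \<le> X t" "X t \<le> 1" using X_ge0 X_le1 t0 by auto
    have rb: "0 \<le> R t" "R t \<le> 1" using R_bounds t0 by auto
    have "Fx a b c d \<mu> u (X t) (R t) \<le> Fx a b c d \<mu> u (X t) 1 + (1 - R t) * Kc"
      using F_le[OF pos xb rb] by (simp add: Kc_def)
    moreover have "Fx a b c d \<mu> u (X t) 1 \<le> - M2" using z2(2)[of "X t"] t xb by (simp add: M2_def)
    moreover have "(1 - R t) * Kc \<le> M2 / 2"
    proof -
      have "1 - R t \<le> M2 / (2 * Kc)" using T2'[OF t0(2)] by simp
      then have "(1 - R t) * Kc \<le> M2 / (2 * Kc) * Kc" using Kc by (intro mult_right_mono) auto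
      then show ?thesis using Kc by simp
    qed
    ultimately show ?thesis by linarith
  qed
  have lower: "Fx a b c d \<mu> u (X t) (R t) \<ge> M1" if t: "t \<ge> T0" "X t \<le> xt - e1" for t
  proof -
    have t0: "t \<ge> 0" using t T0 by auto
    have xb: "0 \<le> X t" "X t \<le> 1" using X_ge0 X_le1 t0 by auto
    have rb: "R t \<le> 1" using R_bounds t0 by auto
    have "X t > 1/2" using Xhalf[OF T0(1,2) t(1)] .
    then have "Fx a b c d \<mu> u (X t) 1 \<ge> M1" using z1(2)[of "X t"] t by (simp add: M1_def)
    then show ?thesis using F_ge_g1[OF pos xb rb] by linarith
  qed
  have "\<exists>t\<ge>T2. - X t > - (xt + e1)"
  proof (rule reach[where f'="\<lambda>t. - Fx a b c d \<mu> u (X t) (R t)", OF dnX T2(2), of "M2/2" "-1" 0])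
    show "0 < M2 / 2" using M2 by simp
    show "- 1 \<le> - X t \<and> - X t \<le> 0" if "t \<ge> T2" for t using X_ge0 X_le1 that T2 by auto
    show "M2 / 2 \<le> - Fx a b c d \<mu> u (X t) (R t)" if "T2 \<le> t" "- X t \<le> - (xt + e1)" for t
      using upper[of t] that by simp
  qed
  then obtain T3 where T3: "T3 \<ge> T2" "- X T3 > - (xt + e1)" by blast
  have up: "X t < xt + e1" if "t \<ge> T3" for t
  proof -
    have "- X t > - (xt + e1)"
    proof (rule barrier_strict[where f'="\<lambda>t. - Fx a b c d \<mu> u (X t) (R t)", OF dnX _ T3(2) _ that])
      show "0 \<le> T3" using T3 T2 by simp
      fix s assume "T3 \<le> s" "- X s = - (xt + e1)"
      then show "0 < - Fx a b c d \<mu> u (X s) (R s)" using upper[of s] M2 T3 by simp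
    qed
    then show ?thesis by simp
  qed
  have "\<exists>t\<ge>T3. X t > xt - e1"
  proof (rule reach[where f'="\<lambda>t. Fx a b c d \<mu> u (X t) (R t)", OF dX _ M1, of T3 0 1])
    show "0 \<le> T3" using T3 T2 by simp
    show "0 \<le> X t \<and> X t \<le> 1" if "t \<ge> T3" for t using X_ge0 X_le1 that T3 T2 by auto
    show "M1 \<le> Fx a b c d \<mu> u (X t) (R t)" if "T3 \<le> t" "X t \<le> xt - e1" for t
      using lower[of t] that T3 T2 by simp
  qed
  then obtain T4 where T4: "T4 \<ge> T3" "X T4 > xt - e1" by blast
  have lo: "X t > xt - e1" if "t \<ge> T4" for t
  proof (rule barrier_strict[where f'="\<lambda>t. Fx a b c d \<mu> u (X t) (R t)", OF dX _ T4(2) _ that])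
    show "0 \<le> T4" using T4 T3 T2 by simp
    fix s assume "T4 \<le> s" "X s = xt - e1"
    then show "0 < Fx a b c d \<mu> u (X s) (R s)" using lower[of s] M1 T4 T3 T2 by simp
  qed
  have "\<bar>X t - xt\<bar> < e" if "t \<ge> T4" for t
    using up[of t] lo[of t] that T4 e1 by auto
  then show ?thesis by blast
qed

lemma converge: assumes T0: "T0 \<ge> 0" "X T0 > 1/2" "R T0 > 0"
  shows "(\<phi> \<longlongrightarrow> (xt, 1)) at_top"
proof -
  have "(X \<longlongrightarrow> xt) at_top"
    unfolding tendsto_iff eventually_at_top_linorder dist_real_def
    using X_conv[OF T0] by blast
  moreover have "(R \<longlongrightarrow> 1) at_top"
  proof -
    have "\<exists>T. \<forall>t\<ge>T. \<bar>R t - 1\<bar> < e" if e: "e > 0" for e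
    proof -
      obtain T where T: "\<And>t. t \<ge> T \<Longrightarrow> 1 - R t < e" using R_conv[OF T0 e] by blast
      have "\<bar>R t - 1\<bar> < e" if "t \<ge> max T 0" for t
        using T[of t] R_bounds[of t] that by auto
      then show ?thesis by blast
    qed
    then show ?thesis unfolding tendsto_iff eventually_at_top_linorder dist_real_def by blast
  qed
  ultimately have "((\<lambda>t. (X t, R t)) \<longlongrightarrow> (xt, 1)) at_top" by (rule tendsto_Pair)
  then show ?thesis by (simp add: X_def R_def)
qed

lemma step1: assumes r0: "R 0 < 1" shows "\<exists>T0\<ge>0. X T0 > 1/2"
proof (rule ccontr)
  assume "\<not> (\<exists>T0\<ge>0. X T0 > 1/2)"
  then have Xle: "\<And>t. t \<ge> 0 \<Longrightarrow> X t \<le> 1/2" by force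
  have Rle: "R t \<le> R 0" if t: "t \<ge> 0" for t
  proof -
    have "- R t \<ge> - R 0 + 0 * (t - 0)"
    proof (rule deriv_mono_gen[where f'="\<lambda>t. - (R t * ((1 - R t) * (2 * X t - 1)))"])
      show "((\<lambda>t. - R t) has_real_derivative - (R t * ((1 - R t) * (2 * X t - 1)))) (at t within {0..})"
        if "t \<ge> 0" for t using DERIV_minus[OF dR[OF that]] .
      fix \<tau> assume "0 \<le> \<tau>" "\<tau> \<le> t"
      then have "X \<tau> \<le> 1/2" "0 \<le> R \<tau>" "R \<tau> \<le> 1" using Xle R_bounds by auto
      then show "0 \<le> - (R \<tau> * ((1 - R \<tau>) * (2 * X \<tau> - 1)))"
        by (simp add: mult_nonneg_nonpos)
    qed (use t in auto)
    then show ?thesis by simp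
  qed
  define W where "W t = X t + beta c d u * ln (1 - R t)" for t
  have Rl1: "R t < 1" if "t \<ge> 0" for t using R_lt1[OF that r0] .
  have dW: "(W has_real_derivative Fx a b c d \<mu> u (X t) (R t) + beta c d u * R t * (1 - 2 * X t)) (at t within {0..})"
    if t: "t \<ge> 0" for t
  proof -
    have h1: "(W has_real_derivative Fx a b c d \<mu> u (X t) (R t) + beta c d u * (1 / (1 - R t) * (- (R t * ((1 - R t) * (2 * X t - 1)))))) (at t within {0..})"
      unfolding W_def[abs_def] using dX[OF t] dR[OF t] Rl1[OF t]
      by (auto intro!: derivative_eq_intros)
    have "1 / (1 - R t) * (- (R t * ((1 - R t) * (2 * X t - 1)))) = R t * (1 - 2 * X t)"
      using Rl1[OF t] by (simp add: field_simps)
    then have eq2: "Fx a b c d \<mu> u (X t) (R t) + beta c d u * (1 / (1 - R t) * (- (R t * ((1 - R t) * (2 * X t - 1)))))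
       = Fx a b c d \<mu> u (X t) (R t) + beta c d u * R t * (1 - 2 * X t)" by (simp add: mult.assoc)
    show ?thesis using h1 by (simp only: eq2)
  qed
  have bpos: "beta c d u > 0" using k0_pos[OF pos] pos by (simp add: beta_def[OF pos])
  have Wle: "W t \<le> 1/2" if t: "t \<ge> 0" for t
  proof -
    have "0 < 1 - R t" "1 - R t \<le> 1" using Rl1[OF t] R_bounds[OF t] by auto
    then have "ln (1 - R t) \<le> 0" by simp
    then have "beta c d u * ln (1 - R t) \<le> 0" using bpos by (simp add: mult_nonneg_nonpos)
    then show ?thesis using Xle[OF t] by (simp add: W_def)
  qed
  define T where "T = \<bar>1/2 - W 0\<bar> / m1 c d \<mu> u + 1"
  have m1: "m1 c d \<mu> u > 0" by (rule m1_pos[OF pos])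
  have T: "T \<ge> 0" using m1 by (simp add: T_def)
  have "W T \<ge> W 0 + m1 c d \<mu> u * (T - 0)"
  proof (rule deriv_mono_gen[OF dW])
    fix \<tau> assume "0 \<le> \<tau>" "\<tau> \<le> T"
    then show "m1 c d \<mu> u \<le> Fx a b c d \<mu> u (X \<tau>) (R \<tau>) + beta c d u * R \<tau> * (1 - 2 * X \<tau>)"
      using step1_bound[OF pos, of "X \<tau>" "R \<tau>"] X_ge0 Xle R_bounds by auto
  qed (use T in auto)
  moreover have "m1 c d \<mu> u * (T - 0) = \<bar>1/2 - W 0\<bar> + m1 c d \<mu> u" using m1 by (simp add: T_def field_simps)
  ultimately have "W T \<ge> W 0 + \<bar>1/2 - W 0\<bar> + m1 c d \<mu> u" by simp
  then show False using Wle[OF T] m1 by linarith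
qed

lemma local_stay:
  assumes x1: "1/2 < x1" "x1 < xt" "x1 < X 0" and x2: "X 0 < x2" "x2 \<le> 1" "xt < x2"
    and \<rho>: "0 < \<rho>" "\<rho> \<le> R 0" "(1 - \<rho>) * (a + b + c + d) < - Fx a b c d \<mu> u x2 1"
    and t: "t \<ge> 0"
  shows "x1 < X t \<and> X t < x2 \<and> \<rho> \<le> R t \<and> R t \<le> 1"
proof -
  have A: "x1 < X s" if "s \<ge> 0" for s
  proof (rule barrier_strict[where f'="\<lambda>t. Fx a b c d \<mu> u (X t) (R t)", OF dX _ x1(3) _ that])
    fix s assume s: "0 \<le> s" "X s = x1"
    have "Fx a b c d \<mu> u x1 1 > 0" using g1_before[of x1] x1 by simp
    moreover have "Fx a b c d \<mu> u x1 (R s) \<ge> Fx a b c d \<mu> u x1 1"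
      using F_ge_g1[OF pos, of x1 "R s"] x1 xt R_bounds[OF s(1)] by simp
    ultimately show "0 < Fx a b c d \<mu> u (X s) (R s)" using s by simp
  qed auto
  have X0h: "X 0 > 1/2" using x1 by simp
  have B: "\<rho> \<le> R s" if "s \<ge> 0" for s using R_mono[OF _ X0h _ that] \<rho> by simp
  have C: "X s < x2" if "s \<ge> 0" for s
  proof -
    have "- X s > - x2"
    proof (rule barrier_strict[where f'="\<lambda>t. - Fx a b c d \<mu> u (X t) (R t)", OF dnX _ _ _ that])
      show "- X 0 > - x2" using x2 by simp
      fix s assume s: "0 \<le> s" "- X s = - x2"
      have rb: "0 \<le> R s" "R s \<le> 1" using R_bounds[OF s(1)] by auto
      have "Fx a b c d \<mu> u x2 (R s) \<le> Fx a b c d \<mu> u x2 1 + (1 - R s) * (a + b + c + d)"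
        using F_le[OF pos, of x2 "R s"] x2 x1 xt rb by simp
      moreover have "(1 - R s) * (a + b + c + d) \<le> (1 - \<rho>) * (a + b + c + d)"
        using B[OF s(1)] pos by (intro mult_right_mono) auto
      ultimately show "0 < - Fx a b c d \<mu> u (X s) (R s)" using s \<rho>(3) by simp
    qed auto
    then show ?thesis by simp
  qed
  show ?thesis using A[OF t] B[OF t] C[OF t] R_bounds[OF t] by simp
qed

end
end


theorem theorem21:
  fixes a b c d \<mu> u xt :: real
  assumes "a > 0" "b > 0" "c > 0" "d > 0" "a + c \<le> b + d"
    and "0 < \<mu>" "\<mu> \<le> 1" "u > (c + d) / 2"
    and "1/2 < xt" "xt < 1" "field a b c d \<mu> u (xt, 1) = 0"
  shows "almost_globally_stable (field a b c d \<mu> u) (xt, 1)"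
proof -
  note P = assms(1-4) assms(6-8)
  have g1xt: "Fx a b c d \<mu> u xt 1 = 0" using assms(11) by (simp add: field_eq zero_prod_def)
  note XT = assms(9) assms(10) g1xt
  let ?f = "field a b c d \<mu> u"
  have phi0: "\<phi> 0 = p0" if "trajectory ?f p0 \<phi>" for p0 \<phi> using that by (simp add: trajectory_def)
  have conv: "(\<phi> \<longlongrightarrow> (xt, 1)) at_top"
    if tr: "trajectory ?f p0 \<phi>" and p0: "p0 \<in> Icube" and T0: "T0 \<ge> 0" "fst (\<phi> T0) > 1/2" "snd (\<phi> T0) > 0"
    for p0 \<phi> T0
    using converge[OF P XT tr p0 T0(1)] T0 X_def[OF P XT tr p0] R_def[OF P XT tr p0] by simp
  have Kc: "a + b + c + d > 0" using P by simp
  have lyap: "lyap_stable ?f Icube (xt, 1)"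
    unfolding lyap_stable_def
  proof (intro allI impI)
    fix \<epsilon> :: real assume \<epsilon>: "\<epsilon> > 0"
    define \<alpha> where "\<alpha> = min (\<epsilon>/2) (min ((xt - 1/2)/2) ((1 - xt)/2))"
    have \<alpha>a: "\<alpha> \<le> \<epsilon>/2" "\<alpha> \<le> (xt - 1/2)/2" "\<alpha> \<le> (1 - xt)/2" unfolding \<alpha>_def
      by (rule min.cobounded1, rule min.coboundedI2[OF min.cobounded1], rule min.coboundedI2[OF min.cobounded2])
    have \<alpha>: "\<alpha> > 0" "xt - \<alpha> > 1/2" "xt + \<alpha> < 1" using \<alpha>a \<epsilon> XT by (auto simp: \<alpha>_def)
    define G where "G = - Fx a b c d \<mu> u (xt + \<alpha>) 1"
    have G: "G > 0" using g1_after[OF P XT, of "xt + \<alpha>"] \<alpha> by (simp add: G_def)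
    define \<eta> where "\<eta> = min (min (\<epsilon>/2) (1/2)) (G / (2 * (a + b + c + d)))"
    have \<eta>a: "\<eta> \<le> \<epsilon>/2" "\<eta> \<le> 1/2" "\<eta> \<le> G / (2 * (a + b + c + d))" unfolding \<eta>_def
      by (rule min.coboundedI1[OF min.cobounded1], rule min.coboundedI1[OF min.cobounded2], rule min.cobounded2)
    have \<eta>: "\<eta> > 0" using \<epsilon> G Kc by (simp add: \<eta>_def)
    have \<eta>K: "\<eta> * (a + b + c + d) < G"
    proof -
      have "\<eta> * (a + b + c + d) \<le> G / (2 * (a + b + c + d)) * (a + b + c + d)"
        using \<eta>a Kc by (intro mult_right_mono) auto
      also have "\<dots> = G / 2" using Kc by (simp add: field_simps)
      finally show ?thesis using G by simp
    qed
    show "\<exists>\<delta>>0. \<forall>p0 \<phi>. p0 \<in> Icube \<and> dist p0 (xt, 1) < \<delta> \<and> trajectory ?f p0 \<phi> \<longrightarrow>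
        (\<forall>t\<ge>0. dist (\<phi> t) (xt, 1) < \<epsilon>)"
    proof (intro exI[of _ "min \<alpha> \<eta>"] conjI allI impI)
      show "min \<alpha> \<eta> > 0" using \<alpha> \<eta> by simp
      fix p0 \<phi> and t :: real
      assume H: "p0 \<in> Icube \<and> dist p0 (xt, 1) < min \<alpha> \<eta> \<and> trajectory ?f p0 \<phi>" and t: "0 \<le> t"
      then have p0: "p0 \<in> Icube" and tr: "trajectory ?f p0 \<phi>" and dd: "dist p0 (xt, 1) < min \<alpha> \<eta>" by auto
      have "dist (fst p0) xt < min \<alpha> \<eta>" "dist (snd p0) 1 < min \<alpha> \<eta>"
        using dist_fst_le[of p0 "(xt, 1)"] dist_snd_le[of p0 "(xt, 1)"] dd by auto
      then have x0: "\<bar>fst (\<phi> 0) - xt\<bar> < \<alpha>" and r0: "\<bar>snd (\<phi> 0) - 1\<bar> < \<eta>"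
        using phi0[OF tr] by (auto simp: dist_real_def)
      have L: "xt - \<alpha> < X \<phi> t \<and> X \<phi> t < xt + \<alpha> \<and> 1 - \<eta> \<le> R \<phi> t \<and> R \<phi> t \<le> 1"
      proof (rule local_stay[OF P XT tr p0])
        show "1/2 < xt - \<alpha>" "xt - \<alpha> < xt" "xt + \<alpha> \<le> 1" "xt < xt + \<alpha>" "0 < 1 - \<eta>" "0 \<le> t"
          using \<alpha> \<eta>a t by auto
        show "xt - \<alpha> < X \<phi> 0" "X \<phi> 0 < xt + \<alpha>" "1 - \<eta> \<le> R \<phi> 0"
          using x0 r0 X_def[OF P XT tr p0] R_def[OF P XT tr p0] by auto
        show "(1 - (1 - \<eta>)) * (a + b + c + d) < - Fx a b c d \<mu> u (xt + \<alpha>) 1"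
          using \<eta>K by (simp add: G_def)
      qed
      then have "\<bar>fst (\<phi> t) - xt\<bar> < \<alpha>" "\<bar>snd (\<phi> t) - 1\<bar> \<le> \<eta>"
        using X_def[OF P XT tr p0] R_def[OF P XT tr p0] by auto
      moreover have "dist (\<phi> t) (xt, 1) \<le> \<bar>fst (\<phi> t) - xt\<bar> + \<bar>snd (\<phi> t) - 1\<bar>"
      proof -
        have "dist (\<phi> t) (xt, 1) = sqrt ((dist (fst (\<phi> t)) xt)\<^sup>2 + (dist (snd (\<phi> t)) 1)\<^sup>2)"
          using dist_Pair_Pair[of "fst (\<phi> t)" "snd (\<phi> t)" xt 1] by simp
        also have "\<dots> \<le> \<bar>dist (fst (\<phi> t)) xt\<bar> + \<bar>dist (snd (\<phi> t)) 1\<bar>"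
          by (rule sqrt_sum_squares_le_sum_abs)
        finally show ?thesis by (simp add: dist_real_def)
      qed
      ultimately show "dist (\<phi> t) (xt, 1) < \<epsilon>" using \<alpha>a \<eta>a by linarith
    qed
  qed
  have attr: "\<exists>\<delta>>0. \<forall>p0 \<phi>. p0 \<in> Icube \<and> dist p0 (xt, 1) < \<delta> \<and> trajectory ?f p0 \<phi> \<longrightarrow>
        (\<phi> \<longlongrightarrow> (xt, 1)) at_top"
  proof (intro exI[of _ "min (xt - 1/2) (1/2)"] conjI allI impI)
    show "min (xt - 1/2) (1/2) > 0" using XT by simp
    fix p0 \<phi>
    assume H: "p0 \<in> Icube \<and> dist p0 (xt, 1) < min (xt - 1/2) (1/2) \<and> trajectory ?f p0 \<phi>"
    then have p0: "p0 \<in> Icube" and tr: "trajectory ?f p0 \<phi>" and dd: "dist p0 (xt, 1) < min (xt - 1/2) (1/2)" by auto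
    have "dist (fst p0) xt < min (xt - 1/2) (1/2)" "dist (snd p0) 1 < min (xt - 1/2) (1/2)"
      using dist_fst_le[of p0 "(xt, 1)"] dist_snd_le[of p0 "(xt, 1)"] dd by auto
    then have "fst (\<phi> 0) > 1/2" "snd (\<phi> 0) > 0"
      using phi0[OF tr] XT by (auto simp: dist_real_def abs_less_iff)
    then show "(\<phi> \<longlongrightarrow> (xt, 1)) at_top" using conv[OF tr p0, of 0] by simp
  qed
  have glob: "(\<phi> \<longlongrightarrow> (xt, 1)) at_top"
    if H: "p0 \<in> Icube - (Btop \<union> Bbot) \<and> trajectory ?f p0 \<phi>" for p0 \<phi>
  proof -
    from H have p0: "p0 \<in> Icube" and tr: "trajectory ?f p0 \<phi>" by auto
    from H have r0: "0 < snd p0" "snd p0 < 1"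
      by (auto simp: Icube_def Btop_def Bbot_def less_le)
    then have "R \<phi> 0 < 1" "R \<phi> 0 > 0" using R_def[OF P XT tr p0] phi0[OF tr] by auto
    obtain T0 where T0: "T0 \<ge> 0" "X \<phi> T0 > 1/2" using step1[OF P XT tr p0 \<open>R \<phi> 0 < 1\<close>] by blast
    have "R \<phi> T0 > 0" using R_pos[OF P XT tr p0 T0(1) \<open>R \<phi> 0 > 0\<close>] .
    then show ?thesis using conv[OF tr p0 T0(1)] T0 X_def[OF P XT tr p0] R_def[OF P XT tr p0] by simp
  qed
  show ?thesis
    unfolding almost_globally_stable_def asympt_stable_def
    using assms(11) lyap attr glob by blast
qed

end
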